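(* Let $G=(V,E)$ be a directed graph, $s\neq t$ vertices, $k\ge 1$ an integer and $e(u,v)\in E$. If $e(u,v)$ is an edge of $SPG_k(s,t)$, then there exist integers $k_f,k_b\ge 0$ such that $EV^*_{k_f}(s,u)$ and $EV^*_{k_b}(v,t)$ both exist, (1) $k_f+1+k_b\le k$, and (2) $EV^*_{k_f}(s,u)\cap EV^*_{k_b}(v,t)=\emptyset$. The converse does not hold in general: there exist $G,s,t,k$ and an edge $e(u,v)$ admitting such $k_f,k_b$ with $e(u,v)\notin SPG_k(s,t)$.
   Context: A path from $x$ to $y$ in $G$ is a vertex sequence $x=v_0,\dots,v_l=y$ with $(v_{i-1},v_i)\in E$; its length is $l$ and $V(p)$, $E(p)$ are its vertex and edge sets. A simple path has no repeated vertex. $SPG_k(s,t)$ is the subgraph of $G$ formed by the union of vertex sets and edge sets of all simple paths from $s$ to $t$ of length at most $k$. For a vertex $u$ and integer $l\ge 0$, $EV^*_l(s,u)$ exists iff there is at least one simple path from $s$ to $u$ of length at most $l$ not containing $t$, and then $EV^*_l(s,u)$ is the intersection of $V(p)$ over all such paths. Symmetrically, $EV^*_l(v,t)$ exists iff there is at least one simple path from $v$ to $t$ of length at most $l$ not containing $s$, and then it is the intersection of $V(p)$ over all such paths. *)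

theory Defs
  imports Main
begin

definition is_path :: "('a \<times> 'a) set \<Rightarrow> 'a list \<Rightarrow> 'a \<Rightarrow> 'a \<Rightarrow> bool" where
  "is_path E p x y \<longleftrightarrow> p \<noteq> [] \<and> hd p = x \<and> last p = y \<and>
     (\<forall>i. Suc i < length p \<longrightarrow> (p ! i, p ! Suc i) \<in> E)"

definition path_len :: "'a list \<Rightarrow> nat" where
  "path_len p = length p - 1"

definition path_edges :: "'a list \<Rightarrow> ('a \<times> 'a) set" where
  "path_edges p = set (zip p (tl p))"

definition simple_path :: "('a \<times> 'a) set \<Rightarrow> 'a list \<Rightarrow> 'a \<Rightarrow> 'a \<Rightarrow> bool" where
  "simple_path E p x y \<longleftrightarrow> is_path E p x y \<and> distinct p"

definition st_paths :: "('a \<times> 'a) set \<Rightarrow> 'a \<Rightarrow> 'a \<Rightarrow> nat \<Rightarrow> 'a list set" where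
  "st_paths E s t k = {p. simple_path E p s t \<and> path_len p \<le> k}"

definition SPG_vertices :: "('a \<times> 'a) set \<Rightarrow> 'a \<Rightarrow> 'a \<Rightarrow> nat \<Rightarrow> 'a set" where
  "SPG_vertices E s t k = (\<Union>p\<in>st_paths E s t k. set p)"

definition SPG_edges :: "('a \<times> 'a) set \<Rightarrow> 'a \<Rightarrow> 'a \<Rightarrow> nat \<Rightarrow> ('a \<times> 'a) set" where
  "SPG_edges E s t k = (\<Union>p\<in>st_paths E s t k. path_edges p)"

definition fwd_paths :: "('a \<times> 'a) set \<Rightarrow> 'a \<Rightarrow> 'a \<Rightarrow> nat \<Rightarrow> 'a \<Rightarrow> 'a list set" where
  "fwd_paths E s t l u = {p. simple_path E p s u \<and> path_len p \<le> l \<and> t \<notin> set p}"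

definition EVf_exists :: "('a \<times> 'a) set \<Rightarrow> 'a \<Rightarrow> 'a \<Rightarrow> nat \<Rightarrow> 'a \<Rightarrow> bool" where
  "EVf_exists E s t l u \<longleftrightarrow> fwd_paths E s t l u \<noteq> {}"

definition EVf :: "('a \<times> 'a) set \<Rightarrow> 'a \<Rightarrow> 'a \<Rightarrow> nat \<Rightarrow> 'a \<Rightarrow> 'a set" where
  "EVf E s t l u = (\<Inter>p\<in>fwd_paths E s t l u. set p)"

definition bwd_paths :: "('a \<times> 'a) set \<Rightarrow> 'a \<Rightarrow> 'a \<Rightarrow> nat \<Rightarrow> 'a \<Rightarrow> 'a list set" where
  "bwd_paths E s t l v = {p. simple_path E p v t \<and> path_len p \<le> l \<and> s \<notin> set p}"

definition EVb_exists :: "('a \<times> 'a) set \<Rightarrow> 'a \<Rightarrow> 'a \<Rightarrow> nat \<Rightarrow> 'a \<Rightarrow> bool" where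
  "EVb_exists E s t l v \<longleftrightarrow> bwd_paths E s t l v \<noteq> {}"

definition EVb :: "('a \<times> 'a) set \<Rightarrow> 'a \<Rightarrow> 'a \<Rightarrow> nat \<Rightarrow> 'a \<Rightarrow> 'a set" where
  "EVb E s t l v = (\<Inter>p\<in>bwd_paths E s t l v. set p)"

definition edge_cond :: "('a \<times> 'a) set \<Rightarrow> 'a \<Rightarrow> 'a \<Rightarrow> nat \<Rightarrow> 'a \<Rightarrow> 'a \<Rightarrow> bool" where
  "edge_cond E s t k u v \<longleftrightarrow> (\<exists>kf kb. EVf_exists E s t kf u \<and> EVb_exists E s t kb v \<and>
      kf + 1 + kb \<le> k \<and> EVf E s t kf u \<inter> EVb E s t kb v = {})"

end

theory Submission
  imports Defs
begin

lemma edge_idx: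
  assumes "(a,b) \<in> path_edges p"
  shows "\<exists>i. Suc i < length p \<and> p!i = a \<and> p!Suc i = b"
proof -
  from assms obtain j where j: "j < length (zip p (tl p))" "zip p (tl p) ! j = (a,b)"
    unfolding path_edges_def by (auto simp: in_set_conv_nth)
  thus ?thesis by (intro exI[of _ j]) (auto simp: nth_tl)
qed

lemma part1:
  assumes sp: "simple_path E p s t" and len: "path_len p \<le> k" and st: "s \<noteq> t"
    and e: "(u,v) \<in> path_edges p"
  shows "edge_cond E s t k u v"
proof -
  obtain i where i: "Suc i < length p" "p!i = u" "p!Suc i = v" using edge_idx[OF e] by blast
  let ?n = "length p"
  have ne: "p \<noteq> []" and h: "hd p = s" and l: "last p = t"
    and ed: "\<And>j. Suc j < ?n \<Longrightarrow> (p!j, p!Suc j) \<in> E" and d: "distinct p"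
    using sp unfolding simple_path_def is_path_def by auto
  have p0: "p!0 = s" using ne h by (simp add: hd_conv_nth)
  have pl: "p!(?n - 1) = t" using ne l by (simp add: last_conv_nth)
  define A where "A = take (Suc i) p"
  define B where "B = drop (Suc i) p"
  have AB: "A @ B = p" unfolding A_def B_def by simp
  have dAB: "distinct (A @ B)" using AB d by simp
  have pA: "is_path E A s u"
    unfolding is_path_def A_def using i ne p0
    by (auto simp: hd_conv_nth last_conv_nth min_def intro!: ed)
  have pB: "is_path E B v t"
    unfolding is_path_def B_def using i ne l
    by (auto simp: hd_conv_nth intro!: ed)
  have tA: "t \<notin> set A"
  proof
    assume "t \<in> set A"
    then obtain j where "j < Suc i" "p!j = t" unfolding A_def
      using i by (auto simp: in_set_conv_nth)
    moreover have "j = ?n - 1" using nth_eq_iff_index_eq[OF d, of j "?n - 1"] pl i \<open>p!j = t\<close> \<open>j < Suc i\<close> by simp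
    ultimately show False using i by simp
  qed
  have sB: "s \<notin> set B"
  proof
    assume "s \<in> set B"
    then obtain j where "j < ?n - Suc i" "p!(Suc i + j) = s" unfolding B_def
      using i by (auto simp: in_set_conv_nth)
    moreover have "Suc i + j < ?n" using \<open>j < ?n - Suc i\<close> by linarith
    moreover have "Suc i + j = 0" using calculation ne nth_eq_iff_index_eq[OF d, of "Suc i + j" 0] p0 i \<open>p!(Suc i + j) = s\<close> \<open>j < ?n - Suc i\<close> by simp
    ultimately show False by simp
  qed
  have fA: "A \<in> fwd_paths E s t i u"
    unfolding fwd_paths_def simple_path_def path_len_def using pA tA dAB i
    by (auto simp: A_def)
  have fB: "B \<in> bwd_paths E s t (?n - Suc i - 1) v"
    unfolding bwd_paths_def simple_path_def path_len_def using pB sB dAB i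
    by (auto simp: B_def)
  have s1: "EVf E s t i u \<subseteq> set A" unfolding EVf_def using fA by blast
  have s2: "EVb E s t (?n - Suc i - 1) v \<subseteq> set B" unfolding EVb_def using fB by blast
  have disj: "set A \<inter> set B = {}" using dAB by simp
  show ?thesis unfolding edge_cond_def
    apply (rule exI[of _ i], rule exI[of _ "?n - Suc i - 1"])
    using fA fB s1 s2 disj len i unfolding EVf_exists_def EVb_exists_def path_len_def
    by auto
qed

definition EE :: "(nat \<times> nat) set" where
  "EE = {(0,4),(4,1),(0,5),(5,1),(1,2),(2,4),(4,5),(5,3)}"

lemma part2_notin: "(1,2) \<notin> SPG_edges EE 0 3 6"
proof
  assume "(1,2) \<in> SPG_edges EE 0 3 6"
  then obtain p where sp: "simple_path EE p 0 3" and e: "(1,2) \<in> path_edges p"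
    unfolding SPG_edges_def st_paths_def by auto
  obtain i where i: "Suc i < length p" "p!i = 1" "p!Suc i = 2" using edge_idx[OF e] by blast
  let ?n = "length p"
  have ne: "p \<noteq> []" and h: "hd p = 0" and l: "last p = 3"
    and ed: "\<And>j. Suc j < ?n \<Longrightarrow> (p!j, p!Suc j) \<in> EE" and d: "distinct p"
    using sp unfolding simple_path_def is_path_def by auto
  have p0: "p!0 = 0" using ne h by (simp add: hd_conv_nth)
  have pl: "p!(?n - 1) = 3" using ne l by (simp add: last_conv_nth)
  have c1: "Suc (Suc i) < ?n"
  proof (rule ccontr)
    assume "\<not> ?thesis" then have "Suc i = ?n - 1" using i by simp
    with pl i show False by simp
  qed
  have a2: "p!Suc (Suc i) = 4" using ed[OF c1] i by (auto simp: EE_def)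
  have c2: "Suc (Suc (Suc i)) < ?n"
  proof (rule ccontr)
    assume "\<not> ?thesis" then have "Suc (Suc i) = ?n - 1" using c1 by simp
    with pl a2 show False by simp
  qed
  have "p!Suc (Suc (Suc i)) \<in> {1,5}" using ed[OF c2] a2 by (auto simp: EE_def)
  moreover have "p!Suc (Suc (Suc i)) \<noteq> 1"
  proof
    assume "p!Suc (Suc (Suc i)) = 1"
    then have "Suc (Suc (Suc i)) = i" using nth_eq_iff_index_eq[OF d, of "Suc (Suc (Suc i))" i] c2 i by simp
    then show False by simp
  qed
  ultimately have a3: "p!Suc (Suc (Suc i)) = 5" by simp
  have i0: "i \<noteq> 0"
  proof
    assume "i = 0" then show False using p0 i by simp
  qed
  then obtain j where j: "i = Suc j" by (cases i) auto
  have "p!j \<in> {4,5}" using ed[of j] i j by (auto simp: EE_def)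
  then show False
  proof
    assume "p!j = 4"
    then have "j = Suc (Suc i)" using nth_eq_iff_index_eq[OF d, of j "Suc (Suc i)"] a2 c1 j by simp
    then show False using j by simp
  next
    assume "p!j \<in> {5}"
    then have "j = Suc (Suc (Suc i))" using nth_eq_iff_index_eq[OF d, of j "Suc (Suc (Suc i))"] a3 c2 j by simp
    then show False using j by simp
  qed
qed

lemma part2_cond: "edge_cond EE 0 3 6 1 2"
proof -
  have f1: "[0,4,1] \<in> fwd_paths EE 0 3 2 1"
    unfolding fwd_paths_def simple_path_def is_path_def path_len_def EE_def
    by (auto simp: less_Suc_eq nth_Cons split: nat.splits)
  have f2: "[0,5,1] \<in> fwd_paths EE 0 3 2 1"
    unfolding fwd_paths_def simple_path_def is_path_def path_len_def EE_def
    by (auto simp: less_Suc_eq nth_Cons split: nat.splits)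
  have b1: "[2,4,5,3] \<in> bwd_paths EE 0 3 3 2"
    unfolding bwd_paths_def simple_path_def is_path_def path_len_def EE_def
    by (auto simp: less_Suc_eq nth_Cons split: nat.splits)
  have "EVf EE 0 3 2 1 \<subseteq> set [0,4,1] \<inter> set [0,5,1]" unfolding EVf_def using f1 f2 by blast
  moreover have "EVb EE 0 3 3 2 \<subseteq> set [2,4,5,3]" unfolding EVb_def using b1 by blast
  ultimately have "EVf EE 0 3 2 1 \<inter> EVb EE 0 3 3 2 = {}"
  proof (intro equalityI subsetI)
    fix x assume A: "EVf EE 0 3 2 1 \<subseteq> set [0,4,1] \<inter> set [0,5,1]"
      "EVb EE 0 3 3 2 \<subseteq> set [2,4,5,3]" "x \<in> EVf EE 0 3 2 1 \<inter> EVb EE 0 3 3 2"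
    then have "x \<in> set [0,4,1] \<inter> set [0,5,1]" "x \<in> set [2,4,5,3]" by blast+
    then show "x \<in> {}" by auto
  qed simp
  then show ?thesis unfolding edge_cond_def EVf_exists_def EVb_exists_def
    using f1 b1 by (intro exI[of _ 2] exI[of _ 3]) auto
qed

theorem lemma3p3:
  shows "(\<forall>(V :: 'a set) E s t k u v.
            E \<subseteq> V \<times> V \<longrightarrow> s \<in> V \<longrightarrow> t \<in> V \<longrightarrow> s \<noteq> t \<longrightarrow> 1 \<le> k \<longrightarrow>
            (u, v) \<in> E \<longrightarrow> (u, v) \<in> SPG_edges E s t k \<longrightarrow> edge_cond E s t k u v)
       \<and> (\<exists>(V :: nat set) E s t k u v.
            finite V \<and> E \<subseteq> V \<times> V \<and> s \<in> V \<and> t \<in> V \<and> s \<noteq> t \<and> 1 \<le> k \<and>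
            (u, v) \<in> E \<and> edge_cond E s t k u v \<and> (u, v) \<notin> SPG_edges E s t k)"
proof
  show "\<forall>(V :: 'a set) E s t k u v.
            E \<subseteq> V \<times> V \<longrightarrow> s \<in> V \<longrightarrow> t \<in> V \<longrightarrow> s \<noteq> t \<longrightarrow> 1 \<le> k \<longrightarrow>
            (u, v) \<in> E \<longrightarrow> (u, v) \<in> SPG_edges E s t k \<longrightarrow> edge_cond E s t k u v"
  proof (intro allI impI)
    fix V :: "'a set" and E s t k u v
    assume "s \<noteq> t" "(u, v) \<in> SPG_edges E s t k"
    then obtain p where "simple_path E p s t" "path_len p \<le> k" "(u, v) \<in> path_edges p"
      unfolding SPG_edges_def st_paths_def by blast
    then show "edge_cond E s t k u v" using part1[of E p s t k u v] \<open>s \<noteq> t\<close> by simp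
  qed
  show "\<exists>(V :: nat set) E s t k u v.
            finite V \<and> E \<subseteq> V \<times> V \<and> s \<in> V \<and> t \<in> V \<and> s \<noteq> t \<and> 1 \<le> k \<and>
            (u, v) \<in> E \<and> edge_cond E s t k u v \<and> (u, v) \<notin> SPG_edges E s t k"
    apply (rule exI[of _ "{0..5}"], rule exI[of _ EE], rule exI[of _ 0], rule exI[of _ 3],
        rule exI[of _ 6], rule exI[of _ 1], rule exI[of _ 2])
    using part2_cond part2_notin by (auto simp: EE_def)
qed

end
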